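(* Let $X=\{x_0,\ldots,x_m\}$, $\tilde X=\{\tilde x_1,\ldots,\tilde x_q\}$ (commuting), $d\in\mathbb{R}^p[[\tilde X]]$, $c\in\mathbb{R}^q\langle\langle X\rangle\rangle$ proper, and $e\in\mathbb{R}^m\langle\langle X\rangle\rangle$. Then $d\circ(c\,\tilde\circ\,\delta_e)=(d\circ c)\,\tilde\circ\,\delta_e$, where $\circ$ is the Wiener-Fliess composition product and $\tilde\circ$ the multiplicative mixed composition product.
   Context: $\mathbb{R}^\ell\langle\langle X\rangle\rangle$: formal power series in noncommuting letters of $X$ with coefficients in $\mathbb{R}^\ell$; proper means $(c,\emptyset)=0$; $c_i$ is the $i$-th component; products of vector-valued series are componentwise. $\mathbb{R}^p[[\tilde X]]$: formal power series in commuting letters with coefficients in $\mathbb{R}^p$. Shuffle product $\sqcup\!\sqcup$: bilinear, $(x_i\eta)\sqcup\!\sqcup(x_j\xi)=x_i(\eta\sqcup\!\sqcup x_j\xi)+x_j(x_i\eta\sqcup\!\sqcup\xi)$, $\eta\sqcup\!\sqcup\emptyset=\emptyset\sqcup\!\sqcup\eta=\eta$. Wiener-Fliess composition (for proper $c$): $d\circ c=\sum_{\tilde\eta\in\tilde X^\ast}(d,\tilde\eta)c^{\sqcup\!\sqcup\tilde\eta}$ with $c^{\sqcup\!\sqcup\emptyset}=1$, $c^{\sqcup\!\sqcup\tilde x_i\tilde\eta}=c_i\sqcup\!\sqcup c^{\sqcup\!\sqcup\tilde\eta}$. Multiplicative mixed composition of $c\in\mathbb{R}^r\langle\langle X\rangle\rangle$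 and $e\in\mathbb{R}^m\langle\langle X\rangle\rangle$: $c\,\tilde\circ\,\delta_e=\sum_{\eta\in X^\ast}(c,\eta)\bar\phi_e(\eta)(\mathbf 1)$, where $\mathbf 1=1\emptyset$ and $\bar\phi_e$ is the homomorphism from words (concatenation) to linear endomorphisms of $\mathbb{R}\langle\langle X\rangle\rangle$ (composition) with $\bar\phi_e(x_0)(w)=x_0w$, $\bar\phi_e(x_i)(w)=x_i(e_i\sqcup\!\sqcup w)$, $i\ge1$. *)

theory Defs
  imports "HOL-Analysis.Analysis" "HOL-Library.Multiset"
begin

text \<open>Letters of X are natural numbers (x_i is represented by i; x_0 by 0). A real formal power series in noncommuting
  letters is a coefficient function on words; a vector-valued series is a
  family of such series indexed by the component number (components 1..l).\<close>

type_synonym series = "nat list \<Rightarrow> real"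

definition one_ser :: series where
  "one_ser = (\<lambda>w. if w = [] then 1 else 0)"

definition prepend :: "nat \<Rightarrow> series \<Rightarrow> series" where
  "prepend a W = (\<lambda>w. case w of [] \<Rightarrow> 0 | b # w' \<Rightarrow> (if b = a then W w' else 0))"

fun wshuf :: "nat list \<Rightarrow> nat list \<Rightarrow> series" where
  "wshuf [] v = (\<lambda>w. if w = v then 1 else 0)"
| "wshuf (a # u) [] = (\<lambda>w. if w = a # u then 1 else 0)"
| "wshuf (a # u) (b # v) =
     (\<lambda>w. prepend a (wshuf u (b # v)) w + prepend b (wshuf (a # u) v) w)"

text \<open>Shuffle product of series (bilinear extension; every coefficient is a
  finite sum).\<close>
definition shuffle :: "series \<Rightarrow> series \<Rightarrow> series" where
  "shuffle c d = (\<lambda>w. \<Sum>\<^sub>\<infinity>(u, v) \<in> UNIV. c u * d v * wshuf u v w)"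

text \<open>Commutative monomials in x~_1..x~_q are multisets of indices.
  Shuffle power  c^{sh M}: c^{sh empty} = 1, c^{sh x~_i M} = c_i sh c^{sh M}.\<close>
definition shpow :: "(nat \<Rightarrow> series) \<Rightarrow> nat multiset \<Rightarrow> series" where
  "shpow c M = foldr (\<lambda>i acc. shuffle (c i) acc) (sorted_list_of_multiset M) one_ser"

text \<open>Wiener-Fliess composition  d o c, with d in R^p[[X~]] (d k M = coefficient
  of the k-th component at monomial M) and c in R^q<<X>>.\<close>
definition wf_comp :: "nat \<Rightarrow> (nat \<Rightarrow> nat multiset \<Rightarrow> real) \<Rightarrow> (nat \<Rightarrow> series) \<Rightarrow> (nat \<Rightarrow> series)" where
  "wf_comp q d c = (\<lambda>k w. \<Sum>\<^sub>\<infinity>M \<in> {M. set_mset M \<subseteq> {1..q}}. d k M * shpow c M w)"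

fun phi :: "(nat \<Rightarrow> series) \<Rightarrow> nat list \<Rightarrow> series \<Rightarrow> series" where
  "phi e [] W = W"
| "phi e (i # eta) W =
     (if i = 0 then prepend 0 (phi e eta W) else prepend i (shuffle (e i) (phi e eta W)))"

definition mixed_comp :: "nat \<Rightarrow> (nat \<Rightarrow> series) \<Rightarrow> (nat \<Rightarrow> series) \<Rightarrow> (nat \<Rightarrow> series)" where
  "mixed_comp m c e = (\<lambda>k w. \<Sum>\<^sub>\<infinity>eta \<in> lists {0..m}. c k eta * phi e eta one_ser w)"

end

theory Submission
  imports Defs
begin

definition dl :: "nat \<Rightarrow> series \<Rightarrow> series" where
  "dl a s = (\<lambda>w. s (a # w))"

lemma fin_infsum:
  fixes f :: "'a \<Rightarrow> real"
  assumes "finite S" "S \<subseteq> A" "\<And>x. x \<in> A \<Longrightarrow> x \<notin> S \<Longrightarrow> f x = 0"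
  shows "infsum f A = sum f S"
proof -
  have "infsum f A = infsum f S"
    by (rule infsum_cong_neutral) (use assms in auto)
  then show ?thesis using assms by simp
qed

lemma fin_summable:
  fixes f :: "'a \<Rightarrow> real"
  assumes "finite S" "\<And>x. x \<in> A \<Longrightarrow> x \<notin> S \<Longrightarrow> f x = 0"
  shows "f summable_on A"
proof -
  have "f summable_on (S \<inter> A)" using assms by simp
  moreover have "f summable_on (S \<inter> A) \<longleftrightarrow> f summable_on A"
    by (rule summable_on_cong_neutral) (use assms in auto)
  ultimately show ?thesis by simp
qed

lemma prepend_Nil[simp]: "prepend a W [] = 0"
  by (simp add: prepend_def)
lemma prepend_Cons[simp]: "prepend a W (b # w) = (if b = a then W w else 0)"
  by (simp add: prepend_def)

lemma wshuf_Nil: "wshuf u v [] = (if u = [] \<and> v = [] then 1 else 0)"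
  by (cases "(u,v)" rule: wshuf.cases) auto

lemma wshuf_Cons: "wshuf u v (a # w) =
   (case u of [] \<Rightarrow> 0 | b # u' \<Rightarrow> if b = a then wshuf u' v w else 0) +
   (case v of [] \<Rightarrow> 0 | b # v' \<Rightarrow> if b = a then wshuf u v' w else 0)"
proof (cases "(u,v)" rule: wshuf.cases)
  case (1 v)
  then show ?thesis by (cases v) auto
next
  case (2 x u')
  then show ?thesis by (cases u') auto
next
  case (3 x u' y v')
  then show ?thesis by auto
qed

lemma wshuf_supp: "wshuf u v w \<noteq> 0 \<Longrightarrow> length u + length v = length w \<and> set u \<subseteq> set w \<and> set v \<subseteq> set w"
proof (induction w arbitrary: u v)
  case Nil
  then show ?case by (auto simp: wshuf_Nil split: if_splits)
next
  case (Cons a w)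
  show ?case
  proof (cases "(case u of [] \<Rightarrow> 0 | b # u' \<Rightarrow> if b = a then wshuf u' v w else 0) \<noteq> 0")
    case True
    then obtain u' where "u = a # u'" "wshuf u' v w \<noteq> 0" by (auto split: list.splits if_splits)
    with Cons.IH[of u' v] show ?thesis by auto
  next
    case False
    with Cons.prems have "(case v of [] \<Rightarrow> 0 | b # v' \<Rightarrow> if b = a then wshuf u v' w else 0) \<noteq> 0"
      by (simp add: wshuf_Cons)
    then obtain v' where "v = a # v'" "wshuf u v' w \<noteq> 0" by (auto split: list.splits if_splits)
    with Cons.IH[of u v'] show ?thesis by auto
  qed
qed

definition Pw :: "nat list \<Rightarrow> (nat list \<times> nat list) set" where
  "Pw w = {(u,v). wshuf u v w \<noteq> 0}"

lemma finite_Pw: "finite (Pw w)"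
proof -
  let ?A = "{xs. set xs \<subseteq> set w \<and> length xs \<le> length w}"
  have "finite ?A" by (rule finite_lists_length_le) simp
  moreover have "Pw w \<subseteq> ?A \<times> ?A" using wshuf_supp by (fastforce simp: Pw_def)
  ultimately show ?thesis by (meson finite_SigmaI finite_subset)
qed

lemma summ_wshuf: "(\<lambda>(u,v). g u v * wshuf u v w) summable_on A"
  by (rule fin_summable[OF finite_Pw]) (auto simp: Pw_def)

lemma shuffle_alt: "shuffle c d w = (\<Sum>(u,v)\<in>Pw w. c u * d v * wshuf u v w)"
  unfolding shuffle_def by (rule fin_infsum[OF finite_Pw]) (auto simp: Pw_def)

lemma sh_Nil: "shuffle c d [] = c [] * d []"
proof -
  have "Pw [] = {([],[])}" by (auto simp: Pw_def wshuf_Nil split: if_splits)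
  then show ?thesis by (simp add: shuffle_alt wshuf_Nil)
qed

lemma sh_Cons: "shuffle c d (a # w) = shuffle (dl a c) d w + shuffle c (dl a d) w"
proof -
  define T1 where "T1 = (\<lambda>(u::nat list,v::nat list). case u of [] \<Rightarrow> 0 | b # u' \<Rightarrow> if b = a then wshuf u' v w else 0)"
  define T2 where "T2 = (\<lambda>(u::nat list,v::nat list). case v of [] \<Rightarrow> 0 | b # v' \<Rightarrow> if b = a then wshuf u v' w else 0)"
  define G1 where "G1 = (\<lambda>(u,v). c u * d v * T1 (u,v))"
  define G2 where "G2 = (\<lambda>(u,v). c u * d v * T2 (u,v))"
  define h1 where "h1 = (\<lambda>(u'::nat list,v::nat list). (a # u', v))"
  define h2 where "h2 = (\<lambda>(u::nat list,v'::nat list). (u, a # v'))"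
  have inj1: "inj h1" by (auto simp: h1_def inj_def)
  have inj2: "inj h2" by (auto simp: h2_def inj_def)
  have z1: "G1 x = 0" if "x \<notin> h1 ` Pw w" for x
  proof -
    obtain u v where x: "x = (u,v)" by fastforce
    show ?thesis
    proof (cases u)
      case (Cons b u')
      show ?thesis
      proof (cases "b = a")
        case True
        with Cons x that have "(u',v) \<notin> Pw w" by (auto simp: h1_def)
        then show ?thesis using Cons True x by (simp add: G1_def T1_def Pw_def)
      qed (use Cons x in \<open>simp add: G1_def T1_def\<close>)
    qed (use x in \<open>simp add: G1_def T1_def\<close>)
  qed
  have z2: "G2 x = 0" if "x \<notin> h2 ` Pw w" for x
  proof -
    obtain u v where x: "x = (u,v)" by fastforce
    show ?thesis
    proof (cases v)
      case (Cons b v')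
      show ?thesis
      proof (cases "b = a")
        case True
        with Cons x that have "(u,v') \<notin> Pw w" by (auto simp: h2_def)
        then show ?thesis using Cons True x by (simp add: G2_def T2_def Pw_def)
      qed (use Cons x in \<open>simp add: G2_def T2_def\<close>)
    qed (use x in \<open>simp add: G2_def T2_def\<close>)
  qed
  have s1: "G1 summable_on UNIV"
    by (rule fin_summable[of "h1 ` Pw w"]) (use finite_Pw z1 in auto)
  have s2: "G2 summable_on UNIV"
    by (rule fin_summable[of "h2 ` Pw w"]) (use finite_Pw z2 in auto)
  have "shuffle c d (a # w) = infsum (\<lambda>x. G1 x + G2 x) UNIV"
    unfolding shuffle_def
    by (rule infsum_cong) (auto simp: G1_def G2_def T1_def T2_def wshuf_Cons algebra_simps)
  also have "\<dots> = infsum G1 UNIV + infsum G2 UNIV" by (rule infsum_add[OF s1 s2])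
  also have "infsum G1 UNIV = infsum G1 (range h1)"
    apply (rule infsum_cong_neutral) using z1 by blast+
  also have "\<dots> = infsum (G1 \<circ> h1) UNIV" by (rule infsum_reindex[OF inj1])
  also have "\<dots> = shuffle (dl a c) d w"
    unfolding shuffle_def by (rule infsum_cong) (auto simp: G1_def T1_def h1_def dl_def)
  also have "infsum G2 UNIV = infsum G2 (range h2)"
    apply (rule infsum_cong_neutral) using z2 by blast+
  also have "\<dots> = infsum (G2 \<circ> h2) UNIV" by (rule infsum_reindex[OF inj2])
  also have "\<dots> = shuffle c (dl a d) w"
    unfolding shuffle_def by (rule infsum_cong) (auto simp: G2_def T2_def h2_def dl_def)
  finally show ?thesis .
qed


lemma sh_local:
  assumes "\<And>v. length v \<le> length w \<Longrightarrow> x v = x' v" "\<And>v. length v \<le> length w \<Longrightarrow> y v = y' v"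
  shows "shuffle x y w = shuffle x' y' w"
  unfolding shuffle_alt
proof (rule sum.cong)
  fix p assume "p \<in> Pw w"
  then obtain u v where p: "p = (u,v)" "wshuf u v w \<noteq> 0" by (auto simp: Pw_def)
  then have "length u \<le> length w" "length v \<le> length w" using wshuf_supp by fastforce+
  then show "(case p of (u, v) \<Rightarrow> x u * y v * wshuf u v w) = (case p of (u, v) \<Rightarrow> x' u * y' v * wshuf u v w)"
    using p assms by simp
qed simp

lemma sh_add_right: "shuffle x (\<lambda>v. y1 v + y2 v) w = shuffle x y1 w + shuffle x y2 w"
  by (simp add: shuffle_alt case_prod_unfold algebra_simps sum.distrib)

lemma sh_add_left: "shuffle (\<lambda>v. y1 v + y2 v) x w = shuffle y1 x w + shuffle y2 x w"
  by (simp add: shuffle_alt case_prod_unfold algebra_simps sum.distrib)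

lemma sh_zero_left[simp]: "shuffle (\<lambda>_. 0) x w = 0"
  by (simp add: shuffle_alt)

lemma sh_zero_right[simp]: "shuffle x (\<lambda>_. 0) w = 0"
  by (simp add: shuffle_alt)

lemma sh_sum_right: "shuffle x (\<lambda>v. \<Sum>j\<in>F. f j * g j v) w = (\<Sum>j\<in>F. f j * shuffle x (g j) w)"
  unfolding shuffle_alt
  by (simp add: case_prod_unfold sum_distrib_left sum_distrib_right mult.assoc mult.left_commute) (rule sum.swap)

lemma dl_sh: "dl a (shuffle c d) = (\<lambda>w. shuffle (dl a c) d w + shuffle c (dl a d) w)"
  by (simp add: dl_def sh_Cons)

lemma sh_comm: "shuffle c d = shuffle d c"
proof
  fix w show "shuffle c d w = shuffle d c w"
    by (induction w arbitrary: c d) (simp_all add: sh_Nil sh_Cons)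
qed

lemma sh_assoc: "shuffle (shuffle a b) c = shuffle a (shuffle b c)"
proof
  fix w show "shuffle (shuffle a b) c w = shuffle a (shuffle b c) w"
  proof (induction w arbitrary: a b c)
    case Nil
    then show ?case by (simp add: sh_Nil)
  next
    case (Cons x w)
    show ?case
      by (simp add: sh_Cons dl_sh sh_add_left sh_add_right Cons.IH)
  qed
qed

lemma sh_lcomm: "shuffle a (shuffle b c) = shuffle b (shuffle a c)"
  by (metis sh_assoc sh_comm)

lemma dl_one[simp]: "dl x one_ser = (\<lambda>_. 0)"
  by (simp add: dl_def one_ser_def)

lemma sh_one_left[simp]: "shuffle one_ser d = d"
proof
  fix w show "shuffle one_ser d w = d w"
    by (induction w arbitrary: d) (simp_all add: sh_Nil sh_Cons one_ser_def[symmetric], simp_all add: one_ser_def dl_def)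
qed

lemma sh_ord:
  assumes "\<And>v. length v < n1 \<Longrightarrow> x v = 0" "\<And>v. length v < n2 \<Longrightarrow> y v = 0" "length w < n1 + n2"
  shows "shuffle x y w = 0"
  using assms
proof (induction w arbitrary: x y n1 n2)
  case Nil
  then show ?case by (cases n1) (auto simp: sh_Nil)
next
  case (Cons a w)
  have "shuffle (dl a x) y w = 0"
    by (rule Cons.IH[of "n1 - 1" _ n2]) (use Cons.prems in \<open>auto simp: dl_def\<close>)
  moreover have "shuffle x (dl a y) w = 0"
    by (rule Cons.IH[of n1 _ "n2 - 1"]) (use Cons.prems in \<open>auto simp: dl_def\<close>)
  ultimately show ?case by (simp add: sh_Cons)
qed


definition Phi :: "(nat \<Rightarrow> series) \<Rightarrow> nat list \<Rightarrow> series" where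
  "Phi e eta = phi e eta one_ser"

definition psi :: "nat \<Rightarrow> (nat \<Rightarrow> series) \<Rightarrow> series \<Rightarrow> series" where
  "psi m e s = (\<lambda>w. \<Sum>\<^sub>\<infinity>eta \<in> lists {0..m}. s eta * Phi e eta w)"

definition LL :: "nat \<Rightarrow> nat \<Rightarrow> nat list set" where
  "LL m n = {eta. set eta \<subseteq> {0..m} \<and> length eta \<le> n}"

lemma finite_LL: "finite (LL m n)"
  unfolding LL_def by (rule finite_lists_length_le) simp

lemma LL_sub: "LL m n \<subseteq> lists {0..m}"
  by (auto simp: LL_def)

lemma Phi_Nil[simp]: "Phi e [] = one_ser"
  by (simp add: Phi_def)

lemma Phi_Cons: "Phi e (i # eta) = prepend i (if i = 0 then Phi e eta else shuffle (e i) (Phi e eta))"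
  by (simp add: Phi_def)

lemma Phi_ord: "Phi e eta v \<noteq> 0 \<Longrightarrow> length eta \<le> length v"
proof (induction eta arbitrary: v)
  case Nil
  then show ?case by simp
next
  case (Cons i eta)
  obtain v' where v: "v = i # v'" and nz: "(if i = 0 then Phi e eta else shuffle (e i) (Phi e eta)) v' \<noteq> 0"
    using Cons.prems by (cases v) (auto simp: Phi_Cons split: if_splits)
  show ?case
  proof (cases "i = 0")
    case True
    with nz Cons.IH[of v'] v show ?thesis by simp
  next
    case False
    with nz have "shuffle (e i) (Phi e eta) v' \<noteq> 0" by simp
    then have "\<not> length v' < 0 + length eta"
      using sh_ord[of 0 "e i" "length eta" "Phi e eta" v'] Cons.IH by fastforce
    with v show ?thesis by simp
  qed
qed

lemma psi_fin: "length w \<le> n \<Longrightarrow> psi m e s w = (\<Sum>eta\<in>LL m n. s eta * Phi e eta w)"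
  unfolding psi_def
  by (rule fin_infsum[OF finite_LL LL_sub]) (use Phi_ord in \<open>fastforce simp: LL_def in_lists_conv_set\<close>)

lemma psi_Nil[simp]: "psi m e s [] = s []"
proof -
  have "LL m 0 = {[]}" by (auto simp: LL_def)
  then show ?thesis by (simp add: psi_fin[of "[]" 0] one_ser_def)
qed

lemma psi_Cons: "psi m e s (i # w) =
  (if i = 0 then psi m e (dl 0 s) w else if i \<le> m then shuffle (e i) (psi m e (dl i s)) w else 0)"
proof (cases "i \<le> m")
  case False
  have "psi m e s (i # w) = 0"
    unfolding psi_def
  proof (rule infsum_0)
    fix eta assume "eta \<in> lists {0..m}"
    show "s eta * Phi e eta (i # w) = 0"
    proof (cases eta)
      case (Cons j x)
      with \<open>eta \<in> lists {0..m}\<close> have "j \<le> m" by simp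
      with False Cons show ?thesis by (simp add: Phi_Cons)
    qed (simp add: one_ser_def)
  qed
  with False show ?thesis by simp
next
  case True
  let ?f = "\<lambda>eta. s eta * Phi e eta (i # w)"
  have "psi m e s (i # w) = infsum ?f ((Cons i) ` lists {0..m})"
    unfolding psi_def
    apply (rule infsum_cong_neutral)
    using True apply force
    subgoal for eta by (cases eta) (auto simp: Phi_Cons one_ser_def)
    by auto
  also have "\<dots> = infsum (?f \<circ> Cons i) (lists {0..m})"
    by (rule infsum_reindex) simp
  also have "\<dots> = infsum (\<lambda>eta. dl i s eta * (if i = 0 then Phi e eta w else shuffle (e i) (Phi e eta) w)) (lists {0..m})"
    by (rule infsum_cong) (simp add: Phi_Cons dl_def)
  finally have eq: "psi m e s (i # w) = \<dots>" .
  show ?thesis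
  proof (cases "i = 0")
    case True
    with eq show ?thesis by (simp add: psi_def)
  next
    case False
    let ?n = "length w"
    have "psi m e s (i # w) = infsum (\<lambda>eta. dl i s eta * shuffle (e i) (Phi e eta) w) (lists {0..m})"
      using eq False by simp
    also have "\<dots> = (\<Sum>eta\<in>LL m ?n. dl i s eta * shuffle (e i) (Phi e eta) w)"
    proof (rule fin_infsum[OF finite_LL LL_sub])
      fix eta assume "eta \<in> lists {0..m}" "eta \<notin> LL m ?n"
      then have "length w < 0 + length eta" by (auto simp: LL_def in_lists_conv_set)
      then have "shuffle (e i) (Phi e eta) w = 0"
        by (rule sh_ord[rotated 2]) (use Phi_ord in fastforce)+
      then show "dl i s eta * shuffle (e i) (Phi e eta) w = 0" by simp
    qed
    also have "\<dots> = shuffle (e i) (\<lambda>v. \<Sum>eta\<in>LL m ?n. dl i s eta * Phi e eta v) w"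
      by (rule sh_sum_right[symmetric])
    also have "\<dots> = shuffle (e i) (psi m e (dl i s)) w"
      by (rule sh_local) (auto simp: psi_fin)
    finally show ?thesis using True False by simp
  qed
qed

lemma psi_add: "psi m e (\<lambda>v. a v + b v) = (\<lambda>w. psi m e a w + psi m e b w)"
proof
  fix w show "psi m e (\<lambda>v. a v + b v) w = psi m e a w + psi m e b w"
    by (simp add: psi_fin[of w "length w"] algebra_simps sum.distrib)
qed

lemma psi_zero[simp]: "psi m e (\<lambda>_. 0) = (\<lambda>_. 0)"
  by (simp add: psi_def)

lemma dl_psi: "dl i (psi m e s) =
  (if i = 0 then psi m e (dl 0 s) else if i \<le> m then shuffle (e i) (psi m e (dl i s)) else (\<lambda>_. 0))"
  by (auto simp: dl_def psi_Cons)

lemma psi_one[simp]: "psi m e one_ser = one_ser"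
proof
  fix w show "psi m e one_ser w = one_ser w"
    by (cases w) (auto simp: psi_Cons one_ser_def[symmetric], auto simp: one_ser_def)
qed

lemma psi_hom_aux: "\<forall>w a b. length w \<le> n \<longrightarrow> psi m e (shuffle a b) w = shuffle (psi m e a) (psi m e b) w"
proof (induction n)
  case 0
  then show ?case by (simp add: sh_Nil)
next
  case (Suc n)
  show ?case
  proof (intro allI impI)
    fix w :: "nat list" and a b :: series assume len: "length w \<le> Suc n"
    show "psi m e (shuffle a b) w = shuffle (psi m e a) (psi m e b) w"
    proof (cases w)
      case Nil
      then show ?thesis by (simp add: sh_Nil)
    next
      case (Cons i w')
      with len have len': "length w' \<le> n" by simp
      have IH: "\<And>a b v. length v \<le> length w' \<Longrightarrow> psi m e (shuffle a b) v = shuffle (psi m e a) (psi m e b) v"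
        using Suc.IH len' by auto
      consider "i = 0" | "i \<noteq> 0" "i \<le> m" | "\<not> i \<le> m" by linarith
      then show ?thesis
      proof cases
        case 1
        then show ?thesis using Cons
          by (simp add: psi_Cons sh_Cons dl_sh psi_add dl_psi IH len')
      next
        case 2
        have "psi m e (shuffle a b) w = shuffle (e i) (\<lambda>v. psi m e (shuffle (dl i a) b) v + psi m e (shuffle a (dl i b)) v) w'"
          using 2 Cons by (simp add: psi_Cons dl_sh psi_add)
        also have "\<dots> = shuffle (e i) (\<lambda>v. shuffle (psi m e (dl i a)) (psi m e b) v + shuffle (psi m e a) (psi m e (dl i b)) v) w'"
          by (rule sh_local) (simp_all add: IH)
        also have "\<dots> = shuffle (psi m e a) (psi m e b) w"
          using 2 Cons
          by (simp add: sh_add_right sh_Cons dl_psi sh_assoc)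
             (metis sh_comm sh_lcomm)
        finally show ?thesis .
      qed (use Cons in \<open>simp add: psi_Cons sh_Cons dl_psi\<close>)
    qed
  qed
qed

lemma psi_hom: "psi m e (shuffle a b) = shuffle (psi m e a) (psi m e b)"
  using psi_hom_aux by blast


lemma foldr_ord:
  "(\<forall>i\<in>set xs. c i [] = 0) \<Longrightarrow> foldr (\<lambda>i acc. shuffle (c i) acc) xs one_ser v \<noteq> 0 \<Longrightarrow> length xs \<le> length v"
proof (induction xs arbitrary: v)
  case Nil
  then show ?case by simp
next
  case (Cons i xs)
  have "\<not> length v < 1 + length xs"
  proof
    assume "length v < 1 + length xs"
    moreover have h1: "\<And>v. length v < 1 \<Longrightarrow> c i v = 0" using Cons.prems by auto
    moreover have "\<forall>i\<in>set xs. c i [] = 0" using Cons.prems by simp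
    then have h2: "\<And>v. length v < length xs \<Longrightarrow> foldr (\<lambda>i acc. shuffle (c i) acc) xs one_ser v = 0"
      using Cons.IH by (meson not_le)
    ultimately have "shuffle (c i) (foldr (\<lambda>i acc. shuffle (c i) acc) xs one_ser) v = 0"
      using sh_ord by blast
    with Cons.prems show False by simp
  qed
  then show ?case by simp
qed

lemma shpow_ord: "(\<forall>i\<in>set_mset M. c i [] = 0) \<Longrightarrow> shpow c M v \<noteq> 0 \<Longrightarrow> size M \<le> length v"
  unfolding shpow_def
  by (metis foldr_ord set_sorted_list_of_multiset mset_sorted_list_of_multiset size_mset)

lemma psi_foldr: "psi m e (foldr (\<lambda>i acc. shuffle (c i) acc) xs one_ser) =
   foldr (\<lambda>i acc. shuffle (psi m e (c i)) acc) xs one_ser"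
  by (induction xs) (simp_all add: psi_hom)

lemma psi_shpow: "psi m e (shpow c M) = shpow (\<lambda>j. psi m e (c j)) M"
  unfolding shpow_def by (rule psi_foldr)

definition MS :: "nat \<Rightarrow> nat \<Rightarrow> nat multiset set" where
  "MS q n = {M. set_mset M \<subseteq> {1..q} \<and> size M \<le> n}"

lemma finite_MS: "finite (MS q n)"
proof -
  have "MS q n \<subseteq> mset ` {xs. set xs \<subseteq> {1..q} \<and> length xs \<le> n}"
  proof
    fix M assume "M \<in> MS q n"
    then show "M \<in> mset ` {xs. set xs \<subseteq> {1..q} \<and> length xs \<le> n}"
      unfolding MS_def
      by (intro image_eqI[of _ _ "sorted_list_of_multiset M"]) (auto, metis mset_sorted_list_of_multiset size_mset)
  qed
  moreover have "finite {xs. set xs \<subseteq> {1..q} \<and> length xs \<le> n}"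
    by (rule finite_lists_length_le) simp
  ultimately show ?thesis by (meson finite_imageI finite_subset)
qed

lemma wf_fin:
  assumes "\<forall>j\<in>{1..q}. c j [] = 0" "length w \<le> n"
  shows "wf_comp q d c k w = (\<Sum>M\<in>MS q n. d k M * shpow c M w)"
  unfolding wf_comp_def
proof (rule fin_infsum[OF finite_MS])
  show "MS q n \<subseteq> {M. set_mset M \<subseteq> {1..q}}" by (auto simp: MS_def)
next
  fix M assume M: "M \<in> {M. set_mset M \<subseteq> {1..q}}" "M \<notin> MS q n"
  then have "size M > length w" using assms(2) by (auto simp: MS_def)
  moreover have "\<forall>i\<in>set_mset M. c i [] = 0" using M assms(1) by auto
  ultimately have "shpow c M w = 0" using shpow_ord by fastforce
  then show "d k M * shpow c M w = 0" by simp
qed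

lemma mixed_psi: "mixed_comp m c e = (\<lambda>k. psi m e (c k))"
  by (simp add: mixed_comp_def psi_def Phi_def)

theorem theorem13:
  fixes m p q :: nat
    and d :: "nat \<Rightarrow> nat multiset \<Rightarrow> real"
    and c e :: "nat \<Rightarrow> series"
  assumes c_alph: "\<forall>j\<in>{1..q}. \<forall>w. c j w \<noteq> 0 \<longrightarrow> w \<in> lists {0..m}"
    and e_alph: "\<forall>j\<in>{1..m}. \<forall>w. e j w \<noteq> 0 \<longrightarrow> w \<in> lists {0..m}"
    and c_proper: "\<forall>j\<in>{1..q}. c j [] = 0"
  shows "\<forall>k\<in>{1..p}. wf_comp q d (mixed_comp m c e) k = mixed_comp m (wf_comp q d c) e k"
proof (intro ballI ext)
  fix k and w :: "nat list"
  let ?n = "length w"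
  have pr: "\<forall>j\<in>{1..q}. psi m e (c j) [] = 0" using c_proper by simp
  have "wf_comp q d (mixed_comp m c e) k w = (\<Sum>M\<in>MS q ?n. d k M * shpow (\<lambda>j. psi m e (c j)) M w)"
    unfolding mixed_psi by (rule wf_fin[where c="\<lambda>j. psi m e (c j)", OF pr]) simp
  also have "\<dots> = (\<Sum>M\<in>MS q ?n. d k M * (\<Sum>eta\<in>LL m ?n. shpow c M eta * Phi e eta w))"
    by (simp add: psi_shpow[symmetric] psi_fin[of w "length w"])
  also have "\<dots> = (\<Sum>eta\<in>LL m ?n. (\<Sum>M\<in>MS q ?n. d k M * shpow c M eta) * Phi e eta w)"
    by (simp add: sum_distrib_left sum_distrib_right mult.assoc) (rule sum.swap)
  also have "\<dots> = (\<Sum>eta\<in>LL m ?n. wf_comp q d c k eta * Phi e eta w)"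
  proof (rule sum.cong)
    fix eta assume "eta \<in> LL m ?n"
    then have "length eta \<le> ?n" by (simp add: LL_def)
    then show "(\<Sum>M\<in>MS q ?n. d k M * shpow c M eta) * Phi e eta w = wf_comp q d c k eta * Phi e eta w"
      using wf_fin[where c=c, OF c_proper] by simp
  qed simp
  also have "\<dots> = mixed_comp m (wf_comp q d c) e k w"
    by (simp add: mixed_psi psi_fin[of w "length w"])
  finally show "wf_comp q d (mixed_comp m c e) k w = mixed_comp m (wf_comp q d c) e k w" .
qed

end
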